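(* Let $G$ be a graph and let $\mathcal{A}$ and $\mathcal{B}$ be two distinct min-max clique coverings of $G$ that both satisfy simple intersection. If there are two distinct cliques $A,A'\in\mathcal{A}$ and two distinct cliques $B,B'\in\mathcal{B}$ such that $A\cap A'\cap B\cap B'\neq\emptyset$, then $A\cap A'=B\cap B'$.
   Context: A clique covering of a graph is a set of cliques such that every edge lies in at least one of them; $\operatorname{cc}(G)$ is its minimum size. A min-max clique covering is a clique covering of size $\operatorname{cc}(G)$ consisting of maximal cliques; it has simple intersection if no three distinct cliques of it share a vertex. *)

theory Defs
  imports Main
begin

definition simple_graph :: "'a set \<Rightarrow> ('a \<Rightarrow> 'a \<Rightarrow> bool) \<Rightarrow> bool" where
  "simple_graph V E \<longleftrightarrow> finite V \<and> (\<forall>x y. E x y \<longrightarrow> x \<in> V \<and> y \<in> V \<and> x \<noteq> y \<and> E y x)"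

definition is_clique :: "'a set \<Rightarrow> ('a \<Rightarrow> 'a \<Rightarrow> bool) \<Rightarrow> 'a set \<Rightarrow> bool" where
  "is_clique V E C \<longleftrightarrow> C \<subseteq> V \<and> (\<forall>x\<in>C. \<forall>y\<in>C. x \<noteq> y \<longrightarrow> E x y)"

definition maximal_clique :: "'a set \<Rightarrow> ('a \<Rightarrow> 'a \<Rightarrow> bool) \<Rightarrow> 'a set \<Rightarrow> bool" where
  "maximal_clique V E C \<longleftrightarrow> is_clique V E C \<and> (\<forall>D. is_clique V E D \<and> C \<subseteq> D \<longrightarrow> D = C)"

definition clique_covering :: "'a set \<Rightarrow> ('a \<Rightarrow> 'a \<Rightarrow> bool) \<Rightarrow> 'a set set \<Rightarrow> bool" where
  "clique_covering V E \<C> \<longleftrightarrow> (\<forall>C\<in>\<C>. is_clique V E C) \<and> (\<forall>x y. E x y \<longrightarrow> (\<exists>C\<in>\<C>. x \<in> C \<and> y \<in> C))"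

definition cc :: "'a set \<Rightarrow> ('a \<Rightarrow> 'a \<Rightarrow> bool) \<Rightarrow> nat" where
  "cc V E = (LEAST n. \<exists>\<C>. clique_covering V E \<C> \<and> finite \<C> \<and> card \<C> = n)"

definition min_max_clique_covering :: "'a set \<Rightarrow> ('a \<Rightarrow> 'a \<Rightarrow> bool) \<Rightarrow> 'a set set \<Rightarrow> bool" where
  "min_max_clique_covering V E \<C> \<longleftrightarrow> clique_covering V E \<C> \<and> finite \<C> \<and> card \<C> = cc V E
     \<and> (\<forall>C\<in>\<C>. maximal_clique V E C)"

definition simple_intersection :: "'a set set \<Rightarrow> bool" where
  "simple_intersection \<C> \<longleftrightarrow> (\<forall>A\<in>\<C>. \<forall>B\<in>\<C>. \<forall>C\<in>\<C>. A \<noteq> B \<and> B \<noteq> C \<and> A \<noteq> C \<longrightarrow> A \<inter> B \<inter> C = {})"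

end

theory Submission
  imports Defs
begin

lemma nbhd_eq:
  assumes cov: "clique_covering V E C" and si: "simple_intersection C"
    and A: "A \<in> C" and A': "A' \<in> C" and ne: "A \<noteq> A'" and x: "x \<in> A" "x \<in> A'"
  shows "insert x {w. E x w} = A \<union> A'"
proof
  show "insert x {w. E x w} \<subseteq> A \<union> A'"
  proof
    fix w assume "w \<in> insert x {w. E x w}"
    then consider "w = x" | "E x w" by blast
    then show "w \<in> A \<union> A'"
    proof cases
      case 1 then show ?thesis using x by blast
    next
      case 2
      then obtain D where D: "D \<in> C" "x \<in> D" "w \<in> D" using cov unfolding clique_covering_def by blast
      have "D = A \<or> D = A'"
      proof (rule ccontr)
        assume "\<not> (D = A \<or> D = A')"
        then have "A \<inter> A' \<inter> D = {}" using si A A' D(1) ne unfolding simple_intersection_def by blast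
        then show False using x D by blast
      qed
      then show ?thesis using D by blast
    qed
  qed
next
  have cA: "is_clique V E A" "is_clique V E A'" using cov A A' unfolding clique_covering_def by auto
  show "A \<union> A' \<subseteq> insert x {w. E x w}"
    using cA x unfolding is_clique_def by auto
qed

lemma inter_char:
  assumes sg: "simple_graph V E" and cov: "clique_covering V E C" and si: "simple_intersection C"
    and mx: "\<forall>D\<in>C. maximal_clique V E D"
    and A: "A \<in> C" and A': "A' \<in> C" and ne: "A \<noteq> A'" and v: "v \<in> A" "v \<in> A'"
  shows "A \<inter> A' = {u. insert u {w. E u w} = insert v {w. E v w}}"
proof
  have Nv: "insert v {w. E v w} = A \<union> A'" using nbhd_eq[OF cov si A A' ne v] .
  show "A \<inter> A' \<subseteq> {u. insert u {w. E u w} = insert v {w. E v w}}"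
  proof
    fix u assume "u \<in> A \<inter> A'"
    then have "insert u {w. E u w} = A \<union> A'" using nbhd_eq[OF cov si A A' ne] by blast
    then show "u \<in> {u. insert u {w. E u w} = insert v {w. E v w}}" using Nv by simp
  qed
  show "{u. insert u {w. E u w} = insert v {w. E v w}} \<subseteq> A \<inter> A'"
  proof
    fix u assume "u \<in> {u. insert u {w. E u w} = insert v {w. E v w}}"
    then have Nu: "insert u {w. E u w} = A \<union> A'" using Nv by simp
    have mA: "maximal_clique V E A" "maximal_clique V E A'" using mx A A' by auto
    have key: "u \<in> Y" if mY: "maximal_clique V E Y" and uX: "u \<in> X" and cX: "is_clique V E X"
      and sub: "Y \<subseteq> insert u {w. E u w}" for X Y
    proof -
      have cY: "is_clique V E Y" using mY unfolding maximal_clique_def by blast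
      have "is_clique V E (insert u Y)"
        unfolding is_clique_def
      proof (intro conjI ballI impI)
        show "insert u Y \<subseteq> V" using cY cX uX unfolding is_clique_def by blast
      next
        fix a b assume ab: "a \<in> insert u Y" "b \<in> insert u Y" "a \<noteq> b"
        show "E a b"
        proof -
          { assume "a = u" then have ?thesis using ab sub by blast }
          moreover
          { assume "b = u" "a \<noteq> u"
            then have "E u a" using ab sub by blast
            then have ?thesis using sg \<open>b = u\<close> unfolding simple_graph_def by blast }
          moreover
          { assume "a \<noteq> u" "b \<noteq> u"
            then have ?thesis using ab cY unfolding is_clique_def by blast }
          ultimately show ?thesis by blast
        qed
      qed
      then have "insert u Y = Y" using mY unfolding maximal_clique_def by blast
      then show ?thesis by blast
    qed
    have cA: "is_clique V E A" "is_clique V E A'" using mA unfolding maximal_clique_def by auto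
    have "u \<in> A \<union> A'" using Nu by blast
    then show "u \<in> A \<inter> A'"
    proof
      assume "u \<in> A"
      moreover have "u \<in> A'" using key[OF mA(2) \<open>u \<in> A\<close> cA(1)] Nu by blast
      ultimately show ?thesis by blast
    next
      assume "u \<in> A'"
      moreover have "u \<in> A" using key[OF mA(1) \<open>u \<in> A'\<close> cA(2)] Nu by blast
      ultimately show ?thesis by blast
    qed
  qed
qed

theorem mainTheorem17:
  fixes V :: "'a set" and E :: "'a \<Rightarrow> 'a \<Rightarrow> bool" and \<A> \<B> :: "'a set set"
  assumes "simple_graph V E"
    and "min_max_clique_covering V E \<A>" and "min_max_clique_covering V E \<B>"
    and "\<A> \<noteq> \<B>"
    and "simple_intersection \<A>" and "simple_intersection \<B>"
    and "A \<in> \<A>" and "A' \<in> \<A>" and "A \<noteq> A'"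
    and "B \<in> \<B>" and "B' \<in> \<B>" and "B \<noteq> B'"
    and "A \<inter> A' \<inter> B \<inter> B' \<noteq> {}"
  shows "A \<inter> A' = B \<inter> B'"
proof -
  obtain v where v: "v \<in> A" "v \<in> A'" "v \<in> B" "v \<in> B'" using assms(13) by blast
  have "A \<inter> A' = {u. insert u {w. E u w} = insert v {w. E v w}}"
    using inter_char[OF assms(1) _ assms(5) _ assms(7,8,9) v(1,2)] assms(2)
    unfolding min_max_clique_covering_def by blast
  moreover have "B \<inter> B' = {u. insert u {w. E u w} = insert v {w. E v w}}"
    using inter_char[OF assms(1) _ assms(6) _ assms(10,11,12) v(3,4)] assms(3)
    unfolding min_max_clique_covering_def by blast
  ultimately show ?thesis by simp
qed

end
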